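(* Let $T>0$, $\gamma\in(0,T]$, $\mathcal{T}=[0,T]$, and let $\mathcal{D}$ be the set of Lebesgue measurable functions $\delta:\mathcal{T}\to[-1,1]$ with $\int_{\mathcal{T}}|\delta(t)|\,\mathrm{d}t\le\gamma$. Let $\mathcal{D}^+_\downarrow\subseteq\mathcal{D}$ be the set of those $\delta\in\mathcal{D}$ that are nonnegative, nonincreasing and left-continuous. Let $\eta^+,\eta^-\in(0,1]$ and, for $x^b\in\mathbb{R}$, $x^r\ge 0$, $y_0\in\mathbb{R}$, $\delta\in\mathcal{D}$, $t\in\mathcal{T}$, let $$y(x^b,x^r,\delta,y_0,t)=y_0+\int_0^t\Big(\eta^+\big[x^b+\delta(s)x^r\big]^+-\tfrac{1}{\eta^-}\big[x^b+\delta(s)x^r\big]^-\Big)\,\mathrm{d}s .$$ Then for any $x^b\in\mathbb{R}$, $y_0\in\mathbb{R}$ and any $x^r\ge 0$, $$\max_{\delta\in\mathcal{D},\,t\in\mathcal{T}} y(x^b,x^r,\delta,y_0,t)=\max_{\delta\in\mathcal{D}^+_\downarrow,\,t\in\mathcal{T}} y(x^b,x^r,\delta,y_0,t).$$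
   Context: $[a]^+=\max\{a,0\}$ and $[a]^-=\max\{-a,0\}$. Here $x^b$ is the base charging power of a battery, $x^r$ the reserve capacity offered for frequency regulation, $\delta$ a normalized frequency-deviation trajectory, $\eta^\pm$ charging/discharging efficiencies, and $y$ the state-of-charge. *)

theory Defs
  imports "HOL-Analysis.Analysis"
begin

definition pospart :: "real \<Rightarrow> real" where "pospart a = max a 0"
definition negpart :: "real \<Rightarrow> real" where "negpart a = max (- a) 0"

text \<open>The set D of admissible frequency deviation trajectories on [0,T].
  Functions are total on the reals; only their values on [0,T] matter.\<close>
definition devset :: "real \<Rightarrow> real \<Rightarrow> (real \<Rightarrow> real) set" where
  "devset T \<gamma> = {\<delta>. set_borel_measurable lebesgue {0..T} \<delta>
      \<and> (\<forall>t\<in>{0..T}. \<delta> t \<in> {-1..1})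
      \<and> (LINT s:{0..T}|lebesgue. \<bar>\<delta> s\<bar>) \<le> \<gamma>}"

definition devset_dec :: "real \<Rightarrow> real \<Rightarrow> (real \<Rightarrow> real) set" where
  "devset_dec T \<gamma> = {\<delta> \<in> devset T \<gamma>.
      (\<forall>t\<in>{0..T}. 0 \<le> \<delta> t)
      \<and> (\<forall>s\<in>{0..T}. \<forall>t\<in>{0..T}. s \<le> t \<longrightarrow> \<delta> t \<le> \<delta> s)
      \<and> (\<forall>t\<in>{0<..T}. (\<delta> \<longlongrightarrow> \<delta> t) (at_left t))}"

definition soc :: "real \<Rightarrow> real \<Rightarrow> real \<Rightarrow> real \<Rightarrow> (real \<Rightarrow> real) \<Rightarrow> real \<Rightarrow> real \<Rightarrow> real" where
  "soc \<eta>p \<eta>m xb xr \<delta> y0 t = y0 + (LINT s:{0..t}|lebesgue.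
      \<eta>p * pospart (xb + \<delta> s * xr) - (1 / \<eta>m) * negpart (xb + \<delta> s * xr))"

end

theory Submission
  imports Defs
begin

lemma integrand_eq:
  fixes a b u :: real
  assumes "0 < a" "a \<le> 1" "0 < b" "b \<le> 1"
  shows "a * pospart u - 1 / b * negpart u = min (a*u) (u/b)"
proof (cases "u \<ge> 0")
  case True
  have f1: "a*u \<le> u" using True assms by (simp add: mult_left_le_one_le)
  have "u*b \<le> u*1" using True assms by (intro mult_left_mono) auto
  then have "u \<le> u/b" using True assms by (simp add: le_divide_eq)
  with f1 show ?thesis using True by (simp add: pospart_def negpart_def)
next
  case False
  have f1: "u \<le> a*u" using False assms by (simp add: mult_le_cancel_right1)
  have "u*1 \<le> u*b" using False assms by (intro mult_left_mono_neg) auto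
  then have g1: "u/b \<le> u" using False assms by (simp add: divide_le_eq)
  have e: "a * pospart u - 1/b*negpart u = u/b" using False by (simp add: pospart_def negpart_def)
  have "min (a*u) (u/b) = u/b" using f1 g1 by (intro min_absorb2) linarith
  then show ?thesis using e by simp
qed

lemma bdd_integrable:
  fixes g :: "real \<Rightarrow> real"
  assumes "set_borel_measurable lebesgue {a..b} g" "\<forall>x\<in>{a..b}. \<bar>g x\<bar> \<le> B"
  shows "set_integrable lebesgue {a..b} g"
proof (rule set_integrable_bound[of lebesgue "{a..b}" "\<lambda>_. B"])
  show "set_integrable lebesgue {a..b} (\<lambda>_. B)"
    unfolding set_integrable_def by (rule integrable_indicator) (auto simp: emeasure_lborel_Icc_eq)
  show "set_borel_measurable lebesgue {a..b} g" by fact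
  show "AE x in lebesgue. x \<in> {a..b} \<longrightarrow> norm (g x) \<le> norm B"
  proof (intro AE_I2 impI)
    fix x assume "x \<in> {a..b}"
    then have "\<bar>g x\<bar> \<le> B" using assms(2) by blast
    then show "norm (g x) \<le> norm B" by simp
  qed
qed

lemma comp_meas:
  fixes \<delta> h :: "real \<Rightarrow> real"
  assumes "set_borel_measurable lebesgue A \<delta>" "A \<in> sets lebesgue" "continuous_on UNIV h"
  shows "set_borel_measurable lebesgue A (\<lambda>s. h (\<delta> s))"
proof -
  have "\<delta> \<in> borel_measurable (restrict_space lebesgue A)"
    using assms unfolding set_borel_measurable_def by (subst borel_measurable_restrict_space_iff) auto
  moreover have "h \<in> borel_measurable borel" using assms(3) by (rule borel_measurable_continuous_onI)
  ultimately have "(\<lambda>s. h (\<delta> s)) \<in> borel_measurable (restrict_space lebesgue A)"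
    using measurable_compose by blast
  then show ?thesis
    unfolding set_borel_measurable_def
    using borel_measurable_restrict_space_iff[of A lebesgue "\<lambda>s. h (\<delta> s)"] assms(2) by simp
qed

lemma upper:
  fixes T \<gamma> \<eta>p \<eta>m xb xr y0 t :: real
  assumes "0 < \<eta>p" and "\<eta>p \<le> 1" and "0 < \<eta>m" and "\<eta>m \<le> 1"
    and "xr \<ge> 0" and D: "\<delta> \<in> devset T \<gamma>" and t: "t \<in> {0..T}"
  shows "soc \<eta>p \<eta>m xb xr \<delta> y0 t \<le> y0 + min (\<eta>p * (t*xb + xr * min t \<gamma>)) ((t*xb + xr * min t \<gamma>) / \<eta>m)"
proof -
  from D have meas: "set_borel_measurable lebesgue {0..T} \<delta>"
    and bnd: "\<forall>t\<in>{0..T}. \<delta> t \<in> {-1..1}" and L1: "(LINT s:{0..T}|lebesgue. \<bar>\<delta> s\<bar>) \<le> \<gamma>"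
    unfolding devset_def by auto
  have sub: "{0..t} \<subseteq> {0..T}" using t by auto
  have intD: "set_integrable lebesgue {0..T} \<delta>"
    using bnd by (intro bdd_integrable[OF meas, of 1]) auto
  have intDt: "set_integrable lebesgue {0..t} \<delta>"
    using set_integrable_subset[OF intD _ sub] by auto
  define h where "h = (\<lambda>u::real. min (\<eta>p*(xb+u*xr)) ((xb+u*xr)/\<eta>m))"
  have hc: "continuous_on UNIV h" unfolding h_def using assms by (intro continuous_intros) auto
  have hb: "\<bar>h u\<bar> \<le> \<eta>p*(\<bar>xb\<bar>+xr) + (\<bar>xb\<bar>+xr)/\<eta>m" if "u \<in> {-1..1}" for u
  proof -
    have "\<bar>u\<bar>*xr \<le> 1*xr" using that assms(5) by (intro mult_right_mono) auto
    then have "\<bar>u*xr\<bar> \<le> xr" using assms(5) by (simp add: abs_mult)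
    then have a: "\<bar>xb+u*xr\<bar> \<le> \<bar>xb\<bar>+xr" by linarith
    have "\<bar>\<eta>p*(xb+u*xr)\<bar> \<le> \<eta>p*(\<bar>xb\<bar>+xr)" using a assms by (simp add: abs_mult)
    moreover have "\<bar>(xb+u*xr)/\<eta>m\<bar> \<le> (\<bar>xb\<bar>+xr)/\<eta>m" using a assms by (simp add: divide_right_mono)
    moreover have "0 \<le> \<eta>p*(\<bar>xb\<bar>+xr)" "0 \<le> (\<bar>xb\<bar>+xr)/\<eta>m" using assms by auto
    ultimately show ?thesis unfolding h_def by linarith
  qed
  have intF: "set_integrable lebesgue {0..t} (\<lambda>s. h (\<delta> s))"
  proof -
    have "set_integrable lebesgue {0..T} (\<lambda>s. h (\<delta> s))"
      using hb bnd by (intro bdd_integrable[OF comp_meas[OF meas _ hc]]) auto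
    then show ?thesis by (rule set_integrable_subset[OF _ _ sub]) auto
  qed
  have socE: "soc \<eta>p \<eta>m xb xr \<delta> y0 t = y0 + (LINT s:{0..t}|lebesgue. h (\<delta> s))"
    unfolding soc_def h_def using integrand_eq[OF assms(1-4)] by simp
  define J where "J = (LINT s:{0..t}|lebesgue. \<delta> s)"
  have int1: "set_integrable lebesgue {0..t} (\<lambda>_. c::real)" for c
    unfolding set_integrable_def by (rule integrable_indicator) (auto simp: emeasure_lborel_Icc_eq)
  have J1: "J \<le> t"
  proof -
    have "J \<le> (LINT s:{0..t}|lebesgue. 1)"
      unfolding J_def using bnd t by (intro set_integral_mono[OF intDt int1]) auto
    also have "\<dots> = t" using t by (simp add: set_integral_const)
    finally show ?thesis .
  qed
  have J2: "J \<le> \<gamma>"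
  proof -
    have "J \<le> (LINT s:{0..t}|lebesgue. \<bar>\<delta> s\<bar>)"
      unfolding J_def by (intro set_integral_mono[OF intDt set_integrable_abs[OF intDt]]) auto
    also have "\<dots> \<le> (LINT s:{0..T}|lebesgue. \<bar>\<delta> s\<bar>)"
      unfolding set_lebesgue_integral_def
      using set_integrable_abs[OF intDt] set_integrable_abs[OF intD] sub
      unfolding set_integrable_def
      by (intro integral_mono) (auto split: split_indicator)
    finally show ?thesis using L1 by linarith
  qed
  have lin: "(LINT s:{0..t}|lebesgue. xb + \<delta> s * xr) = t*xb + J*xr"
  proof -
    have "(LINT s:{0..t}|lebesgue. xb + \<delta> s * xr) = (LINT s:{0..t}|lebesgue. xb) + (LINT s:{0..t}|lebesgue. \<delta> s * xr)"
      by (rule set_integral_add(2)[OF int1]) (use intDt in \<open>rule set_integrable_mult_left\<close>)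
    then show ?thesis using t unfolding J_def by (simp add: set_integral_const)
  qed
  have intL: "set_integrable lebesgue {0..t} (\<lambda>s. xb + \<delta> s * xr)"
    using int1 intDt by (intro set_integral_add(1) set_integrable_mult_left) auto
  have phi: "t*xb + J*xr \<le> t*xb + xr * min t \<gamma>"
  proof -
    have "J * xr \<le> min t \<gamma> * xr" using J1 J2 assms(5) by (intro mult_right_mono) auto
    then show ?thesis by (simp add: mult.commute)
  qed
  have b1: "(LINT s:{0..t}|lebesgue. h (\<delta> s)) \<le> \<eta>p * (t*xb + J*xr)"
  proof -
    have "(LINT s:{0..t}|lebesgue. h (\<delta> s)) \<le> (LINT s:{0..t}|lebesgue. \<eta>p * (xb + \<delta> s * xr))"
      by (intro set_integral_mono[OF intF]) (auto simp: h_def intro!: set_integrable_mult_right intL)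
    then show ?thesis using lin by simp
  qed
  have b2: "(LINT s:{0..t}|lebesgue. h (\<delta> s)) \<le> (t*xb + J*xr) / \<eta>m"
  proof -
    have "(LINT s:{0..t}|lebesgue. h (\<delta> s)) \<le> (LINT s:{0..t}|lebesgue. (xb + \<delta> s * xr) / \<eta>m)"
      by (intro set_integral_mono[OF intF]) (auto simp: h_def intro!: set_integrable_divide intL)
    also have "\<dots> = (LINT s:{0..t}|lebesgue. (xb + \<delta> s * xr)) / \<eta>m"
      by (rule set_integral_divide_zero)
    finally show ?thesis using lin by simp
  qed
  have "\<eta>p * (t*xb + J*xr) \<le> \<eta>p * (t*xb + xr * min t \<gamma>)" using phi assms by (intro mult_left_mono) auto
  moreover have "(t*xb + J*xr) / \<eta>m \<le> (t*xb + xr * min t \<gamma>) / \<eta>m" using phi assms by (intro divide_right_mono) auto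
  ultimately show ?thesis using b1 b2 socE by linarith
qed

lemma achieve:
  fixes T \<gamma> \<eta>p \<eta>m xb xr y0 t0 :: real
  assumes "0 < \<gamma>" and t0: "t0 \<in> {0..T}"
  defines "c \<equiv> min t0 \<gamma> / t0"
  shows "(\<lambda>s. c * indicator {..t0} s) \<in> devset_dec T \<gamma>"
    and "soc \<eta>p \<eta>m xb xr (\<lambda>s. c * indicator {..t0} s) y0 t0
         = y0 + (LINT s:{0..t0}|lebesgue. \<eta>p * pospart (xb + c * xr) - 1 / \<eta>m * negpart (xb + c * xr))"
    and "t0 * c = min t0 \<gamma>"
proof -
  have c0: "0 \<le> c" using t0 assms(1) unfolding c_def by auto
  have c1: "c \<le> 1" using t0 assms(1) unfolding c_def by (cases "t0 = 0") (auto simp: divide_le_eq)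
  show tc: "t0 * c = min t0 \<gamma>" using t0 assms(1) unfolding c_def by (cases "t0 = 0") auto
  define d where "d = (\<lambda>s::real. c * indicator {..t0} s)"
  have meas: "set_borel_measurable lebesgue {0..T} d"
    unfolding set_borel_measurable_def d_def
    by (intro borel_measurable_scaleR borel_measurable_times borel_measurable_const borel_measurable_indicator) auto
  have ab: "(LINT s:{0..T}|lebesgue. \<bar>d s\<bar>) = t0 * c"
  proof -
    have "(\<lambda>x. indicator {0..T} x *\<^sub>R \<bar>d x\<bar>) = (\<lambda>x. indicator {0..t0} x * c)"
      using t0 c0 unfolding d_def by (auto split: split_indicator)
    then have "(LINT s:{0..T}|lebesgue. \<bar>d s\<bar>) = (LINT x|lebesgue. indicator {0..t0} x * c)"
      unfolding set_lebesgue_integral_def by simp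
    also have "\<dots> = t0 * c" using t0 by simp
    finally show ?thesis .
  qed
  have lc: "(d \<longlongrightarrow> d t) (at_left t)" if "t \<in> {0<..T}" for t
  proof (cases "t \<le> t0")
    case True
    have "eventually (\<lambda>s. s \<in> {t-1<..<t}) (at_left t)" by (rule eventually_at_left_real) simp
    then have "eventually (\<lambda>s. d s = d t) (at_left t)"
      by eventually_elim (use True in \<open>auto simp: d_def\<close>)
    then show ?thesis by (rule tendsto_eventually)
  next
    case False
    have "eventually (\<lambda>s. s \<in> {t0<..<t}) (at_left t)" by (rule eventually_at_left_real) (use False in simp)
    then have "eventually (\<lambda>s. d s = d t) (at_left t)"
      by eventually_elim (use False in \<open>auto simp: d_def\<close>)
    then show ?thesis by (rule tendsto_eventually)
  qed
  show "(\<lambda>s. c * indicator {..t0} s) \<in> devset_dec T \<gamma>"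
    unfolding d_def[symmetric] devset_dec_def devset_def
    using meas ab tc c0 c1 lc by (auto simp: d_def split: split_indicator)
  show "soc \<eta>p \<eta>m xb xr (\<lambda>s. c * indicator {..t0} s) y0 t0
         = y0 + (LINT s:{0..t0}|lebesgue. \<eta>p * pospart (xb + c * xr) - 1 / \<eta>m * negpart (xb + c * xr))"
    unfolding soc_def by (intro arg_cong[where f="\<lambda>x. y0 + x"] set_lebesgue_integral_cong) auto
qed

lemma phi_max:
  fixes \<gamma> T xb xr t :: real
  assumes "0 < \<gamma>" "\<gamma> \<le> T" "xr \<ge> 0" "t \<in> {0..T}"
  defines "\<phi> \<equiv> (\<lambda>t. t*xb + xr * min t \<gamma>)"
  shows "\<phi> t \<le> max (\<phi> 0) (max (\<phi> \<gamma>) (\<phi> T))"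
proof (cases "t \<le> \<gamma>")
  case True
  then have e: "\<phi> t = t*(xb+xr)" "\<phi> \<gamma> = \<gamma>*(xb+xr)" "\<phi> 0 = 0" unfolding \<phi>_def using assms
    by (auto simp: algebra_simps min_def)
  show ?thesis
  proof (cases "xb + xr \<ge> 0")
    case True
    then have "t*(xb+xr) \<le> \<gamma>*(xb+xr)" using \<open>t \<le> \<gamma>\<close> by (intro mult_right_mono) auto
    then show ?thesis using e by linarith
  next
    case False
    then have "t*(xb+xr) \<le> 0" using assms(4) by (simp add: mult_nonneg_nonpos)
    then show ?thesis using e by linarith
  qed
next
  case False
  then have e: "\<phi> t = t*xb + xr*\<gamma>" "\<phi> \<gamma> = \<gamma>*xb + xr*\<gamma>" "\<phi> T = T*xb + xr*\<gamma>" unfolding \<phi>_def using assms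
    by (auto simp: min_def)
  show ?thesis
  proof (cases "xb \<ge> 0")
    case True
    then have "t*xb \<le> T*xb" using assms(4) by (intro mult_right_mono) auto
    then show ?thesis using e by linarith
  next
    case False
    then have "t*xb \<le> \<gamma>*xb" using \<open>\<not> t \<le> \<gamma>\<close> by (intro mult_right_mono_neg) auto
    then show ?thesis using e by linarith
  qed
qed

theorem lemma2:
  fixes T \<gamma> \<eta>p \<eta>m xb xr y0 :: real
  assumes "T > 0" and "0 < \<gamma>" and "\<gamma> \<le> T"
    and "0 < \<eta>p" and "\<eta>p \<le> 1" and "0 < \<eta>m" and "\<eta>m \<le> 1"
    and "xr \<ge> 0"
  defines "S1 \<equiv> {soc \<eta>p \<eta>m xb xr \<delta> y0 t | \<delta> t. \<delta> \<in> devset T \<gamma> \<and> t \<in> {0..T}}"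
    and "S2 \<equiv> {soc \<eta>p \<eta>m xb xr \<delta> y0 t | \<delta> t. \<delta> \<in> devset_dec T \<gamma> \<and> t \<in> {0..T}}"
  shows "\<exists>m. m \<in> S1 \<and> (\<forall>v\<in>S1. v \<le> m) \<and> m \<in> S2 \<and> (\<forall>v\<in>S2. v \<le> m)"
proof -
  define \<phi> where "\<phi> = (\<lambda>t. t*xb + xr * min t \<gamma>)"
  define f where "f = (\<lambda>u::real. min (\<eta>p*u) (u/\<eta>m))"
  have fmono: "f a \<le> f b" if "a \<le> b" for a b
  proof -
    have "\<eta>p*a \<le> \<eta>p*b" using that assms by (intro mult_left_mono) auto
    moreover have "a/\<eta>m \<le> b/\<eta>m" using that assms by (intro divide_right_mono) auto
    ultimately show ?thesis unfolding f_def by (intro min.mono)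
  qed
  have pm: "\<phi> t \<le> max (\<phi> 0) (max (\<phi> \<gamma>) (\<phi> T))" if "t \<in> {0..T}" for t
    unfolding \<phi>_def using phi_max[OF assms(2,3,8) that] by simp
  obtain ts where ts: "ts \<in> {0..T}" "\<And>t. t \<in> {0..T} \<Longrightarrow> \<phi> t \<le> \<phi> ts"
  proof -
    consider "max (\<phi> 0) (max (\<phi> \<gamma>) (\<phi> T)) = \<phi> 0" | "max (\<phi> 0) (max (\<phi> \<gamma>) (\<phi> T)) = \<phi> \<gamma>"
      | "max (\<phi> 0) (max (\<phi> \<gamma>) (\<phi> T)) = \<phi> T" by linarith
    then show ?thesis using that pm assms(1,2,3) by (cases) (metis atLeastAtMost_iff less_imp_le order_refl)+
  qed
  have up: "v \<le> y0 + f (\<phi> ts)" if vS: "v \<in> S1" for v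
  proof -
    obtain \<delta> t where v: "v = soc \<eta>p \<eta>m xb xr \<delta> y0 t" "\<delta> \<in> devset T \<gamma>" "t \<in> {0..T}"
      using vS unfolding S1_def by blast
    have "v \<le> y0 + f (\<phi> t)" unfolding v f_def \<phi>_def using upper[OF assms(4-8) v(2,3)] by simp
    also have "\<dots> \<le> y0 + f (\<phi> ts)" using fmono ts v(3) by simp
    finally show ?thesis .
  qed
  define c where "c = min ts \<gamma> / ts"
  note A1 = achieve(1)[OF assms(2) ts(1), folded c_def]
  note A2 = achieve(2)[OF assms(2) ts(1), of \<eta>p \<eta>m xb xr y0, folded c_def]
  note A3 = achieve(3)[OF assms(2) ts(1), folded c_def]
  have "soc \<eta>p \<eta>m xb xr (\<lambda>s. c * indicator {..ts} s) y0 ts = y0 + ts * f (xb + c*xr)"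
  proof -
    have K: "\<eta>p * pospart u - 1/\<eta>m * negpart u = f u" for u
      unfolding f_def by (rule integrand_eq[OF assms(4-7)])
    show ?thesis using A2 ts(1) unfolding K by (simp add: set_integral_const)
  qed
  also have "ts * f (xb + c*xr) = f (\<phi> ts)"
  proof -
    have e1: "ts * (xb + c*xr) = \<phi> ts" unfolding \<phi>_def using A3
      by (simp add: distrib_left mult.commute mult.left_commute)
    have "ts * f (xb + c*xr) = min (ts * (\<eta>p * (xb + c*xr))) (ts * ((xb + c*xr)/\<eta>m))"
      unfolding f_def using ts(1) by (simp add: min_mult_distrib_left)
    also have "\<dots> = f (ts * (xb + c*xr))" unfolding f_def by (simp add: mult.left_commute)
    finally show ?thesis using e1 by simp
  qed
  finally have val: "soc \<eta>p \<eta>m xb xr (\<lambda>s. c * indicator {..ts} s) y0 ts = y0 + f (\<phi> ts)" .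
  have inS2: "y0 + f (\<phi> ts) \<in> S2" unfolding S2_def using A1 ts(1) val[symmetric] by blast
  have S21: "S2 \<subseteq> S1" unfolding S1_def S2_def devset_dec_def by blast
  show ?thesis using inS2 S21 up by blast
qed

end
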